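(* Let $\alpha<\omega_1$, $K\ge1$, $X\subseteq W$ a block subspace and $(z_n)$ a block sequence in $W$ such that II has a strategy in $G^\alpha_X$ to play $(y_0,\dots,y_k)$ satisfying $(y_0,\dots,y_k)\sim_K(z_0,\dots,z_k)$. Then for every block subspace $Y\subseteq X$, ${\rm rank}\big(T((z_n),Y,K)\big)>\alpha$.
   Context: Let $\mathcal W$ be a real Banach space with Schauder basis $(e_n)$. Fix a countable subfield $\mathfrak F\subseteq\mathbb R$ such that $\|\sum_{n\le m}a_ne_n\|\in\mathfrak F$ whenever all $a_n\in\mathfrak F$, and let $W$ be the $\mathfrak F$-vector space of finite $\mathfrak F$-linear combinations of the $e_n$, with the norm of $\mathcal W$; subspaces are $\mathfrak F$-linear in $W$. For nonzero $x=\sum a_ne_n$, ${\rm supp}(x)=\{n:a_n\neq0\}$, and $x<y$ means $\max{\rm supp}(x)<\min{\rm supp}(y)$. A block sequence is a sequence of nonzero vectors $x_0<x_1<\dots$; a block subspace is the span of an infinite block sequence. $(x_i)_{i\le k}\sim_K(y_i)_{i\le k}$ means $\frac1K\|\sum a_ix_i\|\le\|\sum a_iy_i\|\le K\|\sum a_ix_i\|$ for all real $a_i$. $T((z_n),Y,K)$ is the tree of all finite sequences $(y_0,\dots,y_k)$ of vectors of $Y$, including the empty one, with $(y_0,\dots,y_k)\sim_K(z_0,\dots,z_k)$. For a well-founded tree $T$, $\rho_T(s)=\sup\{\rho_T(t)+1:s\prec t\in T\}$ ($0$ at terminal nodes) and ${\rm rank}(T)=\sup\{\rho_T(s)+1:s\in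 T\}$; ill-founded trees have rank $\infty$, with $\beta<\infty$ for every ordinal $\beta$. Game $G^\alpha_X$: in rounds $l=0,1,\dots$, I plays a block subspace $Y_l\subseteq X$ and an ordinal $\xi_l$ with $\xi_0<\alpha$ and $\xi_l<\xi_{l-1}$ for $l\ge1$; II plays a finite-dimensional subspace $F_l\subseteq Y_l$ and a nonzero $y_l\in F_0+\dots+F_l$; the game ends after II's response in the round $k$ with $\xi_k=0$ (immediately with empty outcome if $\alpha=0$); outcome $(y_0,\dots,y_k)$. "II has a strategy to play ... satisfying P" means II can ensure the outcome satisfies P. *)

theory Defs
  imports "HOL-Analysis.Analysis" "HOL-Library.Sublist"
begin

definition schauder_basis :: "(nat \<Rightarrow> 'a::banach) \<Rightarrow> bool" where
  "schauder_basis e \<longleftrightarrow> (\<forall>x. \<exists>!c::nat \<Rightarrow> real. (\<lambda>m. \<Sum>n<m. c n *\<^sub>R e n) \<longlonglongrightarrow> x)"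

definition sb_coeff :: "(nat \<Rightarrow> 'a::banach) \<Rightarrow> 'a \<Rightarrow> nat \<Rightarrow> real" where
  "sb_coeff e x = (THE c. (\<lambda>m. \<Sum>n<m. c n *\<^sub>R e n) \<longlonglongrightarrow> x)"

definition countable_subfield :: "real set \<Rightarrow> bool" where
  "countable_subfield F \<longleftrightarrow> countable F \<and> 0 \<in> F \<and> 1 \<in> F \<and>
     (\<forall>a\<in>F. \<forall>b\<in>F. a + b \<in> F \<and> a * b \<in> F) \<and> (\<forall>a\<in>F. - a \<in> F) \<and>
     (\<forall>a\<in>F. a \<noteq> 0 \<longrightarrow> inverse a \<in> F)"

definition norm_closed :: "real set \<Rightarrow> (nat \<Rightarrow> 'a::banach) \<Rightarrow> bool" where
  "norm_closed F e \<longleftrightarrow> (\<forall>(a::nat \<Rightarrow> real) m. (\<forall>n\<le>m. a n \<in> F) \<longrightarrow> norm (\<Sum>n\<le>m. a n *\<^sub>R e n) \<in> F)"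

definition Fspan :: "real set \<Rightarrow> 'a::real_vector set \<Rightarrow> 'a set" where
  "Fspan F A = {y. \<exists>S c. finite S \<and> S \<subseteq> A \<and> (\<forall>v\<in>S. c v \<in> F) \<and> y = (\<Sum>v\<in>S. c v *\<^sub>R v)}"

definition Wsp :: "real set \<Rightarrow> (nat \<Rightarrow> 'a::banach) \<Rightarrow> 'a set" where
  "Wsp F e = Fspan F (range e)"

definition Fsubspace :: "real set \<Rightarrow> 'a::real_vector set \<Rightarrow> 'a set \<Rightarrow> bool" where
  "Fsubspace F U V \<longleftrightarrow> V \<subseteq> U \<and> 0 \<in> V \<and> (\<forall>x\<in>V. \<forall>y\<in>V. x + y \<in> V) \<and> (\<forall>c\<in>F. \<forall>x\<in>V. c *\<^sub>R x \<in> V)"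

definition fd_subspace :: "real set \<Rightarrow> 'a::real_vector set \<Rightarrow> 'a set \<Rightarrow> bool" where
  "fd_subspace F V Y \<longleftrightarrow> Fsubspace F Y V \<and> (\<exists>S. finite S \<and> V = Fspan F S)"

definition supp :: "(nat \<Rightarrow> 'a::banach) \<Rightarrow> 'a \<Rightarrow> nat set" where
  "supp e x = {n. sb_coeff e x n \<noteq> 0}"

definition block_lt :: "(nat \<Rightarrow> 'a::banach) \<Rightarrow> 'a \<Rightarrow> 'a \<Rightarrow> bool" where
  "block_lt e x y \<longleftrightarrow> Max (supp e x) < Min (supp e y)"

definition block_seq :: "real set \<Rightarrow> (nat \<Rightarrow> 'a::banach) \<Rightarrow> (nat \<Rightarrow> 'a) \<Rightarrow> bool" where
  "block_seq F e x \<longleftrightarrow> (\<forall>i. x i \<in> Wsp F e \<and> x i \<noteq> 0) \<and> (\<forall>i. block_lt e (x i) (x (Suc i)))"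

definition block_subspace :: "real set \<Rightarrow> (nat \<Rightarrow> 'a::banach) \<Rightarrow> 'a set \<Rightarrow> bool" where
  "block_subspace F e Y \<longleftrightarrow> (\<exists>x. block_seq F e x \<and> Y = Fspan F (range x))"

text \<open>(y_0,...,y_k) ~_K (z_0,...,z_k), k+1 = length ys.\<close>
definition sim_K :: "real \<Rightarrow> 'a::real_normed_vector list \<Rightarrow> (nat \<Rightarrow> 'a) \<Rightarrow> bool" where
  "sim_K K ys z \<longleftrightarrow> (\<forall>a::nat \<Rightarrow> real.
     (1 / K) * norm (\<Sum>i<length ys. a i *\<^sub>R z i) \<le> norm (\<Sum>i<length ys. a i *\<^sub>R (ys ! i)) \<and>
     norm (\<Sum>i<length ys. a i *\<^sub>R (ys ! i)) \<le> K * norm (\<Sum>i<length ys. a i *\<^sub>R z i))"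

definition Ttree :: "(nat \<Rightarrow> 'a::real_normed_vector) \<Rightarrow> 'a set \<Rightarrow> real \<Rightarrow> 'a list set" where
  "Ttree z Y K = {ys. set ys \<subseteq> Y \<and> sim_K K ys z}"

text \<open>An ordinal alpha is represented by a well-order; ordinals smaller than alpha
  correspond to elements b of Field alpha (order type of the strict initial segment below b).\<close>

definition ord_lt :: "'b rel \<Rightarrow> 'b \<Rightarrow> 'b \<Rightarrow> bool" where
  "ord_lt \<alpha> b a \<longleftrightarrow> (b, a) \<in> \<alpha> \<and> b \<noteq> a"

definition ord_zero :: "'b rel \<Rightarrow> 'b \<Rightarrow> bool" where
  "ord_zero \<alpha> \<xi> \<longleftrightarrow> \<xi> \<in> Field \<alpha> \<and> (\<forall>b. \<not> ord_lt \<alpha> b \<xi>)"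

text \<open>rho_ge T alpha s b: rho_T(s) \<ge> (ordinal represented by b); this unfolds
  rho_T(s) = sup { rho_T(t)+1 : s \<prec> t \<in> T }.\<close>
inductive rho_ge :: "'a list set \<Rightarrow> 'b rel \<Rightarrow> 'a list \<Rightarrow> 'b \<Rightarrow> bool" for T \<alpha> where
  "\<lbrakk> b \<in> Field \<alpha>;
     \<forall>c. ord_lt \<alpha> c b \<longrightarrow> (\<exists>t\<in>T. strict_prefix s t \<and> rho_ge T \<alpha> t c) \<rbrakk>
   \<Longrightarrow> rho_ge T \<alpha> s b"

definition rho_ge_top :: "'a list set \<Rightarrow> 'b rel \<Rightarrow> 'a list \<Rightarrow> bool" where
  "rho_ge_top T \<alpha> s \<longleftrightarrow> (\<forall>c\<in>Field \<alpha>. \<exists>t\<in>T. strict_prefix s t \<and> rho_ge T \<alpha> t c)"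

definition ill_founded :: "'a list set \<Rightarrow> bool" where
  "ill_founded T \<longleftrightarrow> (\<exists>f. \<forall>n. f n \<in> T \<and> strict_prefix (f n) (f (Suc n)))"

text \<open>rank(T) > alpha: either T is ill-founded (rank = infinity), or
  sup { rho_T(s)+1 : s \<in> T } > alpha, i.e. some s has rho_T(s) \<ge> alpha.\<close>
definition rank_gt :: "'a list set \<Rightarrow> 'b rel \<Rightarrow> bool" where
  "rank_gt T \<alpha> \<longleftrightarrow> ill_founded T \<or> (\<exists>s\<in>T. rho_ge_top T \<alpha> s)"

text \<open>Legal sequences of moves of player I, [(Y_0,xi_0),...,(Y_l,xi_l)], where the game
  has not ended before round l.\<close>
definition I_legal :: "real set \<Rightarrow> (nat \<Rightarrow> 'a::banach) \<Rightarrow> 'b rel \<Rightarrow> 'a set \<Rightarrow> ('a set \<times> 'b) list \<Rightarrow> bool" where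
  "I_legal F e \<alpha> X ps \<longleftrightarrow> ps \<noteq> [] \<and>
     (\<forall>j<length ps. block_subspace F e (fst (ps ! j)) \<and> fst (ps ! j) \<subseteq> X) \<and>
     snd (ps ! 0) \<in> Field \<alpha> \<and>
     (\<forall>j. 0 < j \<and> j < length ps \<longrightarrow> ord_lt \<alpha> (snd (ps ! j)) (snd (ps ! (j - 1)))) \<and>
     (\<forall>j. j + 1 < length ps \<longrightarrow> \<not> ord_zero \<alpha> (snd (ps ! j)))"

definition subsum :: "(nat \<Rightarrow> 'a::real_vector set) \<Rightarrow> nat \<Rightarrow> 'a set" where
  "subsum Fs l = {y. \<exists>v. (\<forall>j\<le>l. v j \<in> Fs j) \<and> y = (\<Sum>j\<le>l. v j)}"

text \<open>A strategy for II maps the history of I's moves to II's answer (F_l, y_l);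
  II's earlier answers are determined by the strategy itself.\<close>
definition II_strategy_wins ::
  "real set \<Rightarrow> (nat \<Rightarrow> 'a::banach) \<Rightarrow> 'b rel \<Rightarrow> 'a set \<Rightarrow> ('a list \<Rightarrow> bool)
   \<Rightarrow> (('a set \<times> 'b) list \<Rightarrow> 'a set \<times> 'a) \<Rightarrow> bool" where
  "II_strategy_wins F e \<alpha> X P \<sigma> \<longleftrightarrow>
     (Field \<alpha> = {} \<longrightarrow> P []) \<and>
     (\<forall>ps. I_legal F e \<alpha> X ps \<longrightarrow>
        (let l = length ps - 1; r = (\<lambda>j. \<sigma> (take (Suc j) ps)) in
          fd_subspace F (fst (r l)) (fst (ps ! l)) \<and>
          snd (r l) \<noteq> 0 \<and>
          snd (r l) \<in> subsum (\<lambda>j. fst (r j)) l \<and>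
          (ord_zero \<alpha> (snd (ps ! l)) \<longrightarrow> P (map (\<lambda>j. snd (r j)) [0..<Suc l]))))"

definition II_has_strategy ::
  "real set \<Rightarrow> (nat \<Rightarrow> 'a::banach) \<Rightarrow> 'b rel \<Rightarrow> 'a set \<Rightarrow> ('a list \<Rightarrow> bool) \<Rightarrow> bool" where
  "II_has_strategy F e \<alpha> X P \<longleftrightarrow> (\<exists>\<sigma>. II_strategy_wins F e \<alpha> X P \<sigma>)"

end

theory Submission
  imports Defs
begin
lemma Fspan_zero: "0 \<in> Fspan F A"
  unfolding Fspan_def by (rule CollectI, rule exI[of _ "{}"]) auto

lemma Fspan_add:
  assumes F: "countable_subfield F" and x: "x \<in> Fspan F A" and y: "y \<in> Fspan F A"
  shows "x + y \<in> Fspan F A"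
proof -
  obtain S1 c1 where 1: "finite S1" "S1 \<subseteq> A" "\<forall>v\<in>S1. c1 v \<in> F" "x = (\<Sum>v\<in>S1. c1 v *\<^sub>R v)"
    using x unfolding Fspan_def by blast
  obtain S2 c2 where 2: "finite S2" "S2 \<subseteq> A" "\<forall>v\<in>S2. c2 v \<in> F" "y = (\<Sum>v\<in>S2. c2 v *\<^sub>R v)"
    using y unfolding Fspan_def by blast
  define d1 where "d1 v = (if v \<in> S1 then c1 v else 0)" for v
  define d2 where "d2 v = (if v \<in> S2 then c2 v else 0)" for v
  have s1: "(\<Sum>v\<in>S1 \<union> S2. d1 v *\<^sub>R v) = x"
    unfolding 1(4) d1_def
    by (rule sum.mono_neutral_cong_right) (use 1 2 in auto)
  have s2: "(\<Sum>v\<in>S1 \<union> S2. d2 v *\<^sub>R v) = y"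
    unfolding 2(4) d2_def
    by (rule sum.mono_neutral_cong_right) (use 1 2 in auto)
  have "x + y = (\<Sum>v\<in>S1 \<union> S2. (d1 v + d2 v) *\<^sub>R v)"
    using s1 s2 by (simp add: scaleR_add_left sum.distrib)
  moreover have "\<forall>v\<in>S1 \<union> S2. d1 v + d2 v \<in> F"
    using F 1(3) 2(3) unfolding countable_subfield_def d1_def d2_def by auto
  ultimately show ?thesis unfolding Fspan_def using 1 2
    by (intro CollectI exI[of _ "S1 \<union> S2"] exI[of _ "\<lambda>v. d1 v + d2 v"]) auto
qed

lemma Fspan_sum:
  assumes F: "countable_subfield F" and "\<forall>j\<le>l. v j \<in> Fspan F A"
  shows "(\<Sum>j\<le>(l::nat). v j) \<in> Fspan F A"
  using assms(2)
proof (induction l)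
  case 0 then show ?case by simp
next
  case (Suc l) then show ?case by (simp add: Fspan_add[OF F])
qed

lemma sim_K_prefix:
  assumes "sim_K K (ys @ zs) z" shows "sim_K K ys z"
  unfolding sim_K_def
proof
  fix a :: "nat \<Rightarrow> real"
  define a' where "a' i = (if i < length ys then a i else 0)" for i
  have e1: "(\<Sum>i<length (ys@zs). a' i *\<^sub>R z i) = (\<Sum>i<length ys. a i *\<^sub>R z i)"
    unfolding a'_def by (rule sum.mono_neutral_cong_right) auto
  have e2: "(\<Sum>i<length (ys@zs). a' i *\<^sub>R ((ys@zs) ! i)) = (\<Sum>i<length ys. a i *\<^sub>R (ys ! i))"
    unfolding a'_def by (rule sum.mono_neutral_cong_right) (auto simp: nth_append)
  show "1 / K * norm (\<Sum>i<length ys. a i *\<^sub>R z i) \<le> norm (\<Sum>i<length ys. a i *\<^sub>R ys ! i) \<and>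
         norm (\<Sum>i<length ys. a i *\<^sub>R ys ! i) \<le> K * norm (\<Sum>i<length ys. a i *\<^sub>R z i)"
    using assms[unfolded sim_K_def, rule_format, of a'] e1 e2 by simp
qed

lemma I_legal_take:
  assumes "I_legal F e \<alpha> X ps" "0 < n" "n \<le> length ps"
  shows "I_legal F e \<alpha> X (take n ps)"
  using assms unfolding I_legal_def by (auto simp: nth_take)

definition resp :: "(('a set \<times> 'b) list \<Rightarrow> 'a set \<times> 'a) \<Rightarrow> ('a set \<times> 'b) list \<Rightarrow> 'a list" where
  "resp \<sigma> ps = map (\<lambda>j. snd (\<sigma> (take (Suc j) ps))) [0..<length ps]"

lemma resp_snoc: "resp \<sigma> (ps @ [q]) = resp \<sigma> ps @ [snd (\<sigma> (ps @ [q]))]"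
  unfolding resp_def by auto

lemma strat_at:
  assumes W: "II_strategy_wins F e \<alpha> X P \<sigma>" and L: "I_legal F e \<alpha> X qs"
    and len: "length qs = Suc l"
  shows "fd_subspace F (fst (\<sigma> qs)) (fst (qs ! l)) \<and>
         snd (\<sigma> qs) \<in> subsum (\<lambda>j. fst (\<sigma> (take (Suc j) qs))) l \<and>
         (ord_zero \<alpha> (snd (qs ! l)) \<longrightarrow> P (map (\<lambda>j. snd (\<sigma> (take (Suc j) qs))) [0..<Suc l]))"
proof -
  have "take (Suc l) qs = qs" using len by simp
  then show ?thesis
    using W[unfolded II_strategy_wins_def, THEN conjunct2, rule_format, OF L] len
    by (simp add: Let_def)
qed

lemma resp_in_Y:
  assumes F: "countable_subfield F" and W: "II_strategy_wins F e \<alpha> X P \<sigma>"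
    and L: "I_legal F e \<alpha> X ps" and fY: "\<forall>p\<in>set ps. fst p = Y"
    and YA: "Y = Fspan F A"
  shows "set (resp \<sigma> ps) \<subseteq> Y"
proof
  fix y assume "y \<in> set (resp \<sigma> ps)"
  then obtain j where j: "j < length ps" "y = snd (\<sigma> (take (Suc j) ps))"
    unfolding resp_def by auto
  have sub: "fst (\<sigma> (take (Suc i) ps)) \<subseteq> Y" if "i \<le> j" for i
  proof -
    have Li: "I_legal F e \<alpha> X (take (Suc i) ps)" using I_legal_take[OF L] that j by auto
    have "fd_subspace F (fst (\<sigma> (take (Suc i) ps))) (fst (take (Suc i) ps ! i))"
      using strat_at[OF W Li] that j by simp
    moreover have "fst (take (Suc i) ps ! i) = Y" using fY that j by auto
    ultimately show ?thesis by (simp add: fd_subspace_def Fsubspace_def)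
  qed
  have Lj: "I_legal F e \<alpha> X (take (Suc j) ps)" using I_legal_take[OF L] j by auto
  have "snd (\<sigma> (take (Suc j) ps)) \<in> subsum (\<lambda>i. fst (\<sigma> (take (Suc i) (take (Suc j) ps)))) j"
    using strat_at[OF W Lj] j by simp
  then obtain v where v: "\<forall>i\<le>j. v i \<in> fst (\<sigma> (take (Suc i) (take (Suc j) ps)))"
    "snd (\<sigma> (take (Suc j) ps)) = (\<Sum>i\<le>j. v i)"
    unfolding subsum_def by blast
  have "\<forall>i\<le>j. v i \<in> Fspan F A"
  proof (intro allI impI)
    fix i assume "i \<le> j"
    then have "take (Suc i) (take (Suc j) ps) = take (Suc i) ps" by (simp add: min_def)
    then show "v i \<in> Fspan F A" using v(1) sub \<open>i \<le> j\<close> YA by auto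
  qed
  then show "y \<in> Y" using Fspan_sum[OF F] v(2) j(2) YA by simp
qed

theorem lemma4p8:
  fixes e :: "nat \<Rightarrow> 'a::banach" and F :: "real set" and \<alpha> :: "'b rel"
    and K :: real and X :: "'a set" and z :: "nat \<Rightarrow> 'a"
  assumes "schauder_basis e"
    and "countable_subfield F"
    and "norm_closed F e"
    and "Well_order \<alpha>" and "countable (Field \<alpha>)"
    and "K \<ge> 1"
    and "block_subspace F e X"
    and "block_seq F e z"
    and "II_has_strategy F e \<alpha> X (\<lambda>ys. sim_K K ys z)"
  shows "\<forall>Y. block_subspace F e Y \<and> Y \<subseteq> X \<longrightarrow> rank_gt (Ttree z Y K) \<alpha>"
proof (intro allI impI)
  fix Y assume Y: "block_subspace F e Y \<and> Y \<subseteq> X"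
  obtain A where YA: "Y = Fspan F A" using Y unfolding block_subspace_def by blast
  obtain \<sigma> where W: "II_strategy_wins F e \<alpha> X (\<lambda>ys. sim_K K ys z) \<sigma>"
    using assms(9) unfolding II_has_strategy_def by blast
  let ?T = "Ttree z Y K"
  have wf: "wf (\<alpha> - Id)" using assms(4) unfolding well_order_on_def by blast
  have claim: "\<And>ps. I_legal F e \<alpha> X ps \<Longrightarrow> (\<forall>p\<in>set ps. fst p = Y) \<Longrightarrow> snd (last ps) = c
     \<Longrightarrow> resp \<sigma> ps \<in> ?T \<and> rho_ge ?T \<alpha> (resp \<sigma> ps) c" for c
  proof (induction c rule: wf_induct_rule[OF wf])
    case (1 c ps)
    have ne: "ps \<noteq> []" using 1(2) unfolding I_legal_def by blast
    have lastn: "last ps = ps ! (length ps - 1)" using ne by (simp add: last_conv_nth)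
    have cF: "c \<in> Field \<alpha>"
    proof (cases "length ps = 1")
      case True then show ?thesis using 1(2,4) lastn unfolding I_legal_def by auto
    next
      case False
      then have "ord_lt \<alpha> (snd (ps ! (length ps - 1))) (snd (ps ! (length ps - 1 - 1)))"
        using 1(2) ne unfolding I_legal_def by (metis diff_less length_greater_0_conv less_one linorder_neqE_nat not_less_zero zero_less_diff)
      then show ?thesis using 1(4) lastn unfolding ord_lt_def by (auto intro: FieldI1)
    qed
    have ext: "resp \<sigma> (ps @ [(Y, c')]) \<in> ?T \<and> rho_ge ?T \<alpha> (resp \<sigma> (ps @ [(Y, c')])) c'"
      if lt: "ord_lt \<alpha> c' c" for c'
    proof -
      have "(c', c) \<in> \<alpha> - Id" using lt unfolding ord_lt_def by auto
      moreover have "I_legal F e \<alpha> X (ps @ [(Y, c')])"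
      proof -
        have A: "\<forall>j<length (ps @ [(Y, c')]). block_subspace F e (fst ((ps @ [(Y, c')]) ! j)) \<and> fst ((ps @ [(Y, c')]) ! j) \<subseteq> X"
          using Y 1(3) by (auto simp: nth_append)
        have B: "snd ((ps @ [(Y, c')]) ! 0) \<in> Field \<alpha>" using 1(2) ne unfolding I_legal_def
          by (simp add: nth_append)
        have C: "\<forall>j. 0 < j \<and> j < length (ps @ [(Y, c')]) \<longrightarrow> ord_lt \<alpha> (snd ((ps @ [(Y, c')]) ! j)) (snd ((ps @ [(Y, c')]) ! (j - 1)))"
        proof (intro allI impI)
          fix j assume j: "0 < j \<and> j < length (ps @ [(Y, c')])"
          show "ord_lt \<alpha> (snd ((ps @ [(Y, c')]) ! j)) (snd ((ps @ [(Y, c')]) ! (j - 1)))"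
          proof (cases "j = length ps")
            case True then show ?thesis using lt 1(4) lastn ne by (simp add: nth_append)
          next
            case False then show ?thesis using j 1(2) unfolding I_legal_def by (auto simp: nth_append)
          qed
        qed
        have D: "\<forall>j. j + 1 < length (ps @ [(Y, c')]) \<longrightarrow> \<not> ord_zero \<alpha> (snd ((ps @ [(Y, c')]) ! j))"
        proof (intro allI impI)
          fix j assume j: "j + 1 < length (ps @ [(Y, c')])"
          show "\<not> ord_zero \<alpha> (snd ((ps @ [(Y, c')]) ! j))"
          proof (cases "j = length ps - 1")
            case True then show ?thesis using lt 1(4) lastn ne unfolding ord_zero_def
              by (auto simp: nth_append)
          next
            case False then show ?thesis using j 1(2) unfolding I_legal_def by (auto simp: nth_append)
          qed
        qed
        show ?thesis unfolding I_legal_def using A B C D by simp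
      qed
      moreover have "\<forall>p\<in>set (ps @ [(Y, c')]). fst p = Y" using 1(3) by auto
      ultimately show ?thesis using 1(1) by auto
    qed
    have inT: "resp \<sigma> ps \<in> ?T"
    proof (cases "ord_zero \<alpha> c")
      case True
      have "sim_K K (map (\<lambda>j. snd (\<sigma> (take (Suc j) ps))) [0..<Suc (length ps - 1)]) z"
        using strat_at[OF W 1(2), of "length ps - 1"] True 1(4) lastn ne by simp
      then have "sim_K K (resp \<sigma> ps) z" using ne unfolding resp_def by simp
      then show ?thesis unfolding Ttree_def
        using resp_in_Y[OF assms(2) W 1(2) 1(3) YA] by simp
    next
      case False
      then obtain c' where lt: "ord_lt \<alpha> c' c" using cF unfolding ord_zero_def by blast
      have "resp \<sigma> (ps @ [(Y, c')]) \<in> ?T" using ext[OF lt] by blast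
      then show ?thesis unfolding resp_snoc Ttree_def using sim_K_prefix by auto
    qed
    have "rho_ge ?T \<alpha> (resp \<sigma> ps) c"
    proof (rule rho_ge.intros)
      show "c \<in> Field \<alpha>" by (rule cF)
      show "\<forall>c'. ord_lt \<alpha> c' c \<longrightarrow> (\<exists>t\<in>?T. strict_prefix (resp \<sigma> ps) t \<and> rho_ge ?T \<alpha> t c')"
        using ext by (metis resp_snoc strict_prefixI' )
    qed
    then show ?case using inT by blast
  qed
  have "[] \<in> ?T" unfolding Ttree_def sim_K_def by simp
  moreover have "rho_ge_top ?T \<alpha> []"
    unfolding rho_ge_top_def
  proof
    fix c assume c: "c \<in> Field \<alpha>"
    have "I_legal F e \<alpha> X [(Y, c)]" using c Y unfolding I_legal_def by auto
    then have "resp \<sigma> [(Y, c)] \<in> ?T \<and> rho_ge ?T \<alpha> (resp \<sigma> [(Y, c)]) c"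
      using claim by auto
    moreover have "resp \<sigma> [(Y, c)] \<noteq> []" unfolding resp_def by simp
    ultimately show "\<exists>t\<in>?T. strict_prefix [] t \<and> rho_ge ?T \<alpha> t c"
      by (metis Nil_prefix strict_prefixI)
  qed
  ultimately show "rank_gt ?T \<alpha>" unfolding rank_gt_def by blast
qed

end
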